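(* Let $J'=(z_w,z_w')$ be a nonempty open interval, let $r:J'\to\mathbb{R}$ be differentiable and non-increasing, and let $h:J'\to\mathbb{R}$ be differentiable with $\dot h(z)=1+h(z)^2-2r(z)h(z)$ on $J'$, having exactly one zero $z_*\in J'$. Consider Newton's iteration $z_{n+1}=N(z_n)$ with $N(z)=z-\dfrac{h(z)}{1+h(z)^2-2r(z)h(z)}$. (1) If $r(z)>0$ for all $z\in(z_w,z_* )$, then for every $z_0\in(z_w,z_* )$ the iterates are well defined and $(z_n)$ increases monotonically to $z_*$. (2) If $r(z)<0$ for all $z\in(z_*,z_w')$, then for every $z_0\in(z_*,z_w')$ the iterates are well defined and $(z_n)$ decreases monotonically to $z_*$.
   Context: $\dot{}$ denotes differentiation with respect to $z$. Here $h<0$ on $(z_w,z_* )$ and $h>0$ on $(z_*,z_w')$. *)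

theory Defs
  imports Complex_Main
begin

definition newton_map :: "(real \<Rightarrow> real) \<Rightarrow> (real \<Rightarrow> real) \<Rightarrow> real \<Rightarrow> real" where
  "newton_map h r z = z - h z / (1 + (h z)\<^sup>2 - 2 * r z * h z)"

definition iterates_well_defined ::
  "real \<Rightarrow> real \<Rightarrow> (real \<Rightarrow> real) \<Rightarrow> (real \<Rightarrow> real) \<Rightarrow> real \<Rightarrow> bool" where
  "iterates_well_defined a b h r z0 \<longleftrightarrow>
     (\<forall>n. (newton_map h r ^^ n) z0 \<in> {a<..<b} \<and>
          1 + (h ((newton_map h r ^^ n) z0))\<^sup>2 - 2 * r ((newton_map h r ^^ n) z0) * h ((newton_map h r ^^ n) z0) \<noteq> 0)"

end

theory Submission
  imports Defs
begin

lemma iter_inc: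
  fixes N :: "real \<Rightarrow> real"
  assumes "a < z0" "z0 < c"
    and st: "\<And>z. a < z \<Longrightarrow> z < c \<Longrightarrow> z < N z \<and> N z < c"
    and ct: "\<And>z. a < z \<Longrightarrow> z < c \<Longrightarrow> isCont N z"
  shows "(\<forall>n. (N^^n) z0 \<in> {z0..<c}) \<and> incseq (\<lambda>n. (N^^n) z0) \<and> (\<lambda>n. (N^^n) z0) \<longlonglongrightarrow> c"
proof -
  define X where "X n = (N^^n) z0" for n
  have XS: "X (Suc n) = N (X n)" for n by (simp add: X_def)
  have bnd: "X n \<in> {z0..<c}" for n
  proof (induction n)
    case 0 then show ?case using assms by (simp add: X_def)
  next
    case (Suc n)
    then have "a < X n" "X n < c" "z0 \<le> X n" using assms(1) by auto
    then have "X n < N (X n)" "N (X n) < c" using st by auto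
    then show ?case using XS[of n] \<open>z0 \<le> X n\<close> by simp
  qed
  have stp: "X n < X (Suc n)" for n
  proof -
    have "a < X n" "X n < c" using bnd[of n] assms(1) by auto
    then show ?thesis using st XS[of n] by auto
  qed
  have inc: "incseq X"
    by (rule incseq_SucI) (simp add: less_imp_le stp)
  have bc: "\<forall>i. X i \<le> c" using bnd by (simp add: less_imp_le)
  obtain L where L: "X \<longlonglongrightarrow> L" "\<forall>i. X i \<le> L"
    using incseq_convergent[OF inc bc] by blast
  have Lc: "L \<le> c" using LIMSEQ_le_const2[OF L(1)] bc by blast
  have "L = c"
  proof (rule ccontr)
    assume "L \<noteq> c"
    then have Lc': "L < c" using Lc by simp
    have aL: "a < L" using L(2)[rule_format, of 0] assms by (simp add: X_def)
    have "(\<lambda>n. N (X n)) \<longlonglongrightarrow> N L" using isCont_tendsto_compose[OF ct[OF aL Lc'] L(1)] .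
    moreover have "(\<lambda>n. N (X n)) \<longlonglongrightarrow> L" using LIMSEQ_Suc[OF L(1)] by (simp add: XS)
    ultimately have "N L = L" using LIMSEQ_unique by blast
    then show False using st[OF aL Lc'] by simp
  qed
  then show ?thesis using bnd inc L(1) unfolding X_def by auto
qed

lemma iter_dec:
  fixes N :: "real \<Rightarrow> real"
  assumes "c < z0" "z0 < b"
    and st: "\<And>z. c < z \<Longrightarrow> z < b \<Longrightarrow> N z < z \<and> c < N z"
    and ct: "\<And>z. c < z \<Longrightarrow> z < b \<Longrightarrow> isCont N z"
  shows "(\<forall>n. (N^^n) z0 \<in> {c<..z0}) \<and> decseq (\<lambda>n. (N^^n) z0) \<and> (\<lambda>n. (N^^n) z0) \<longlonglongrightarrow> c"
proof -
  define X where "X n = (N^^n) z0" for n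
  have XS: "X (Suc n) = N (X n)" for n by (simp add: X_def)
  have bnd: "X n \<in> {c<..z0}" for n
  proof (induction n)
    case 0 then show ?case using assms by (simp add: X_def)
  next
    case (Suc n)
    then have "c < X n" "X n < b" "X n \<le> z0" using assms(2) by auto
    then have "N (X n) < X n" "c < N (X n)" using st by auto
    then show ?case using XS[of n] \<open>X n \<le> z0\<close> by simp
  qed
  have stp: "X (Suc n) < X n" for n
  proof -
    have "c < X n" "X n < b" using bnd[of n] assms(2) by auto
    then show ?thesis using st XS[of n] by auto
  qed
  have dec: "decseq X"
    by (rule decseq_SucI) (simp add: less_imp_le stp)
  have bc: "\<forall>i. c \<le> X i" using bnd by (simp add: less_imp_le)
  obtain L where L: "X \<longlonglongrightarrow> L" "\<forall>i. L \<le> X i"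
    using decseq_convergent[OF dec bc] by blast
  have Lc: "c \<le> L" using LIMSEQ_le_const[OF L(1)] bc by blast
  have "L = c"
  proof (rule ccontr)
    assume "L \<noteq> c"
    then have Lc': "c < L" using Lc by simp
    have aL: "L < b" using L(2)[rule_format, of 0] assms by (simp add: X_def)
    have "(\<lambda>n. N (X n)) \<longlonglongrightarrow> N L" using isCont_tendsto_compose[OF ct[OF Lc' aL] L(1)] .
    moreover have "(\<lambda>n. N (X n)) \<longlonglongrightarrow> L" using LIMSEQ_Suc[OF L(1)] by (simp add: XS)
    ultimately have "N L = L" using LIMSEQ_unique by blast
    then show False using st[OF Lc' aL] by simp
  qed
  then show ?thesis using bnd dec L(1) unfolding X_def by auto
qed

theorem theorem3p8:
  fixes zw zw' zs :: real and r h :: "real \<Rightarrow> real"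
  assumes "zw < zw'"
    and "\<forall>z\<in>{zw<..<zw'}. r differentiable (at z)"
    and "\<forall>x\<in>{zw<..<zw'}. \<forall>y\<in>{zw<..<zw'}. x \<le> y \<longrightarrow> r y \<le> r x"
    and "\<forall>z\<in>{zw<..<zw'}. (h has_real_derivative (1 + (h z)\<^sup>2 - 2 * r z * h z)) (at z)"
    and "zs \<in> {zw<..<zw'}" and "h zs = 0"
    and "\<forall>z\<in>{zw<..<zw'}. h z = 0 \<longrightarrow> z = zs"
  shows "((\<forall>z\<in>{zw<..<zs}. r z > 0) \<longrightarrow>
           (\<forall>z0\<in>{zw<..<zs}. iterates_well_defined zw zw' h r z0 \<and>
              incseq (\<lambda>n. (newton_map h r ^^ n) z0) \<and>
              (\<lambda>n. (newton_map h r ^^ n) z0) \<longlonglongrightarrow> zs))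
       \<and> ((\<forall>z\<in>{zs<..<zw'}. r z < 0) \<longrightarrow>
           (\<forall>z0\<in>{zs<..<zw'}. iterates_well_defined zw zw' h r z0 \<and>
              decseq (\<lambda>n. (newton_map h r ^^ n) z0) \<and>
              (\<lambda>n. (newton_map h r ^^ n) z0) \<longlonglongrightarrow> zs))"
proof -
  define g where "g z = 1 + (h z)\<^sup>2 - 2 * r z * h z" for z
  have dh: "(h has_real_derivative g z) (at z)" if "zw < z" "z < zw'" for z
    using assms(4) that by (simp add: g_def)
  have ch: "isCont h z" if "zw < z" "z < zw'" for z using DERIV_isCont[OF dh[OF that]] .
  have cr: "isCont r z" if "zw < z" "z < zw'" for z
    using assms(2) that DERIV_isCont real_differentiable_def by fastforce
  have rmono: "r y \<le> r x" if "zw < x" "x \<le> y" "y < zw'" for x y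
    using assms(3) that by auto
  have zs: "zw < zs" "zs < zw'" using assms(5) by auto
  have hz: "h z = 0 \<Longrightarrow> z = zs" if "zw < z" "z < zw'" for z using assms(7) that by auto
  have conth: "continuous_on {x..y} h" if "zw < x" "y < zw'" for x y
    using ch that by (intro continuous_at_imp_continuous_on) auto
  have N_def: "newton_map h r z = z - h z / g z" for z by (simp add: newton_map_def g_def)
  have cN: "isCont (newton_map h r) z" if "zw < z" "z < zw'" "g z \<noteq> 0" for z
  proof -
    have "isCont (\<lambda>z. z - h z / (1 + (h z)\<^sup>2 - 2 * r z * h z)) z"
      using ch[OF that(1,2)] cr[OF that(1,2)] that(3) unfolding g_def
      by (intro continuous_intros) auto
    then show ?thesis unfolding newton_map_def .
  qed
  have hneg: "h z < 0" if zz: "zw < z" "z < zs" for z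
  proof (rule ccontr)
    assume "\<not> h z < 0"
    then have hz0: "h z > 0" using hz[of z] that zs by force
    have "g zs = 1" by (simp add: g_def assms(6))
    then obtain d where d: "d > 0" "\<forall>t>0. t < d \<longrightarrow> h (zs - t) < h zs"
      using DERIV_pos_inc_left[OF dh[OF zs]] by auto
    define y where "y = (max z (zs - d) + zs) / 2"
    have y: "z < y" "y < zs" "zs - y < d" using that d(1) unfolding y_def max_def min_def by (auto simp: field_simps)
    have hy: "h y < 0" using d(2)[rule_format, of "zs - y"] y assms(6) by simp
    obtain x where x: "z \<le> x" "x \<le> y" "h x = 0"
      using IVT2'[of h y 0 z, OF _ _ _ conth[of z y]] hy hz0 y zz zs by force
    then show False using hz[of x] zz y zs by force
  qed
  have hpos: "h z > 0" if zz: "zs < z" "z < zw'" for z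
  proof (rule ccontr)
    assume "\<not> h z > 0"
    then have hz0: "h z < 0" using hz[of z] that zs by force
    have "g zs = 1" by (simp add: g_def assms(6))
    then obtain d where d: "d > 0" "\<forall>t>0. t < d \<longrightarrow> h zs < h (zs + t)"
      using DERIV_pos_inc_right[OF dh[OF zs]] by auto
    define y where "y = (min z (zs + d) + zs) / 2"
    have y: "y < z" "zs < y" "y - zs < d" using that d(1) unfolding y_def max_def min_def by (auto simp: field_simps)
    have hy: "h y > 0" using d(2)[rule_format, of "y - zs"] y assms(6) by simp
    obtain x where x: "y \<le> x" "x \<le> z" "h x = 0"
      using IVT2'[of h z 0 y, OF _ _ _ conth[of y z]] hy hz0 y zz zs by force
    then show False using hz[of x] zz y zs by force
  qed
  have P1: "\<forall>z0\<in>{zw<..<zs}. iterates_well_defined zw zw' h r z0 \<and>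
              incseq (\<lambda>n. (newton_map h r ^^ n) z0) \<and>
              (\<lambda>n. (newton_map h r ^^ n) z0) \<longlonglongrightarrow> zs"
    if rpos: "\<forall>z\<in>{zw<..<zs}. r z > 0"
  proof
    have gpos: "g z > 0" if "zw < z" "z < zs" for z
    proof -
      have "r z * h z < 0" using rpos hneg[OF that] that by (simp add: mult_pos_neg)
      moreover have "0 \<le> (h z)\<^sup>2" by simp
      ultimately show ?thesis unfolding g_def by linarith
    qed
    have step: "z < newton_map h r z \<and> newton_map h r z < zs" if z: "zw < z" "z < zs" for z
    proof -
      obtain \<xi> where xi: "z < \<xi>" "\<xi> < zs" "h zs - h z = (zs - z) * g \<xi>"
        using MVT2[of z zs h g] z zs dh by force
      obtain \<eta> where eta: "z < \<eta>" "\<eta> < \<xi>" "h \<xi> - h z = (\<xi> - z) * g \<eta>"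
        using MVT2[of z \<xi> h g] z zs dh xi by force
      have "g \<eta> > 0" using gpos eta xi z by auto
      moreover have "\<xi> - z > 0" using eta by simp
      ultimately have "(\<xi> - z) * g \<eta> > 0" by simp
      then have hzx: "h z < h \<xi>" using eta by linarith
      have hx: "h \<xi> < 0" using hneg xi z by auto
      have rx: "0 < r \<xi>" "r \<xi> \<le> r z" using rpos xi z rmono[of z \<xi>] zs by auto
      have "(- h \<xi>)^2 < (- h z)^2" using hzx hx by (intro power_strict_mono) auto
      then have sq: "(h \<xi>)\<^sup>2 < (h z)\<^sup>2" by simp
      have "r \<xi> * (- h \<xi>) \<le> r z * (- h z)"
        using rx hzx hx by (intro mult_mono) auto
      then have gx: "g \<xi> < g z" using sq unfolding g_def by simp
      have gz: "g z > 0" using gpos z by simp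
      have "(zs - z) * g \<xi> < (zs - z) * g z" using gx xi by (intro mult_strict_left_mono) auto
      then have "- h z < (zs - z) * g z" using xi assms(6) by linarith
      then have a: "- h z / g z < zs - z" using gz by (metis pos_divide_less_eq)
      have b: "0 < - h z / g z" using gz hneg[OF z] by (simp add: divide_neg_pos)
      show ?thesis using a b unfolding N_def by simp
    qed
    fix z0 assume z0: "z0 \<in> {zw<..<zs}"
    have R: "(\<forall>n. (newton_map h r^^n) z0 \<in> {z0..<zs}) \<and> incseq (\<lambda>n. (newton_map h r^^n) z0)
       \<and> (\<lambda>n. (newton_map h r^^n) z0) \<longlonglongrightarrow> zs"
      using z0 step cN gpos zs by (intro iter_inc[of zw]) (auto simp: less_imp_neq[symmetric])
    have "iterates_well_defined zw zw' h r z0"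
      unfolding iterates_well_defined_def
    proof
      fix n
      have "(newton_map h r^^n) z0 \<in> {z0..<zs}" using R by blast
      then have "zw < (newton_map h r^^n) z0" "(newton_map h r^^n) z0 < zs" using z0 by auto
      then show "(newton_map h r ^^ n) z0 \<in> {zw<..<zw'} \<and>
          1 + (h ((newton_map h r ^^ n) z0))\<^sup>2 - 2 * r ((newton_map h r ^^ n) z0) * h ((newton_map h r ^^ n) z0) \<noteq> 0"
        using gpos[of "(newton_map h r^^n) z0"] zs unfolding g_def by auto
    qed
    then show "iterates_well_defined zw zw' h r z0 \<and>
              incseq (\<lambda>n. (newton_map h r ^^ n) z0) \<and>
              (\<lambda>n. (newton_map h r ^^ n) z0) \<longlonglongrightarrow> zs" using R by blast
  qed
  have P2: "\<forall>z0\<in>{zs<..<zw'}. iterates_well_defined zw zw' h r z0 \<and>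
              decseq (\<lambda>n. (newton_map h r ^^ n) z0) \<and>
              (\<lambda>n. (newton_map h r ^^ n) z0) \<longlonglongrightarrow> zs"
    if rneg: "\<forall>z\<in>{zs<..<zw'}. r z < 0"
  proof
    have gpos: "g z > 0" if "zs < z" "z < zw'" for z
    proof -
      have "r z * h z < 0" using rneg hpos[OF that] that by (simp add: mult_neg_pos)
      moreover have "0 \<le> (h z)\<^sup>2" by simp
      ultimately show ?thesis unfolding g_def by linarith
    qed
    have step: "newton_map h r z < z \<and> zs < newton_map h r z" if z: "zs < z" "z < zw'" for z
    proof -
      obtain \<xi> where xi: "zs < \<xi>" "\<xi> < z" "h z - h zs = (z - zs) * g \<xi>"
        using MVT2[of zs z h g] z zs dh by force
      obtain \<eta> where eta: "\<xi> < \<eta>" "\<eta> < z" "h z - h \<xi> = (z - \<xi>) * g \<eta>"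
        using MVT2[of \<xi> z h g] z zs dh xi by force
      have "g \<eta> > 0" using gpos eta xi z by auto
      moreover have "z - \<xi> > 0" using eta by simp
      ultimately have "(z - \<xi>) * g \<eta> > 0" by simp
      then have hzx: "h \<xi> < h z" using eta by linarith
      have hx: "h \<xi> > 0" using hpos xi z by auto
      have rx: "r \<xi> < 0" "r z \<le> r \<xi>" using rneg xi z rmono[of \<xi> z] zs by auto
      have sq: "(h \<xi>)\<^sup>2 < (h z)\<^sup>2" using hzx hx by (intro power_strict_mono) auto
      have "(- r \<xi>) * h \<xi> \<le> (- r z) * h z"
        using rx hzx hx by (intro mult_mono) auto
      then have gx: "g \<xi> < g z" using sq unfolding g_def by simp
      have gz: "g z > 0" using gpos z by simp
      have "(z - zs) * g \<xi> < (z - zs) * g z" using gx xi by (intro mult_strict_left_mono) auto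
      then have "h z < (z - zs) * g z" using xi assms(6) by linarith
      then have a: "h z / g z < z - zs" using gz by (metis pos_divide_less_eq)
      have b: "0 < h z / g z" using gz hpos[OF z] by simp
      show ?thesis using a b unfolding N_def by simp
    qed
    fix z0 assume z0: "z0 \<in> {zs<..<zw'}"
    have R: "(\<forall>n. (newton_map h r^^n) z0 \<in> {zs<..z0}) \<and> decseq (\<lambda>n. (newton_map h r^^n) z0)
       \<and> (\<lambda>n. (newton_map h r^^n) z0) \<longlonglongrightarrow> zs"
      using z0 step cN gpos zs by (intro iter_dec[of _ _ zw']) (auto simp: less_imp_neq[symmetric])
    have "iterates_well_defined zw zw' h r z0"
      unfolding iterates_well_defined_def
    proof
      fix n
      have "(newton_map h r^^n) z0 \<in> {zs<..z0}" using R by blast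
      then have "zs < (newton_map h r^^n) z0" "(newton_map h r^^n) z0 < zw'" using z0 by auto
      then show "(newton_map h r ^^ n) z0 \<in> {zw<..<zw'} \<and>
          1 + (h ((newton_map h r ^^ n) z0))\<^sup>2 - 2 * r ((newton_map h r ^^ n) z0) * h ((newton_map h r ^^ n) z0) \<noteq> 0"
        using gpos[of "(newton_map h r^^n) z0"] zs unfolding g_def by auto
    qed
    then show "iterates_well_defined zw zw' h r z0 \<and>
              decseq (\<lambda>n. (newton_map h r ^^ n) z0) \<and>
              (\<lambda>n. (newton_map h r ^^ n) z0) \<longlonglongrightarrow> zs" using R by blast
  qed
  show ?thesis using P1 P2 by blast
qed

end
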